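(* Let $k,l\ge1$, $1\le r\le 2k(2l+1)$, $\mathcal{B}=\mathcal{B}(2k,2l+1;r)$ and $G=\langle H,V\rangle$. Then \[|\mathcal{O}_G(\mathcal{B})|=\frac14\left(\binom{2k(2l+1)}{r}+2\binom{k(2l+1)}{\frac r2}+\sum_{t=0}^{r}\binom{2k}{t}\binom{2kl}{\frac{r-t}{2}}\right).\]
   Context: $\mathcal{B}(2k,2l+1;r)$ is the set of all subsets of exactly $r$ cells (boards with $r$ blocked cells) of a grid with $2k$ rows and $2l+1$ columns. $\langle H,V\rangle=\{R_0,H,V,R_{180}\}$ is the group generated by the reflections $H$, $V$ across the horizontal and vertical midlines (with $R_{180}$ the 180-degree rotation), acting on boards; $\mathcal{O}_G(\mathcal{B})$ is the set of orbits. Convention: $\binom{a}{b}=0$ when $b$ is not a nonnegative integer or $b>a$. *)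

theory Defs
  imports Complex_Main
begin

(* Cells of a grid with m rows and n columns: (row, column), 0-indexed. *)
definition cells :: "nat \<Rightarrow> nat \<Rightarrow> (nat \<times> nat) set" where
  "cells m n = {0..<m} \<times> {0..<n}"

definition boards :: "nat \<Rightarrow> nat \<Rightarrow> nat \<Rightarrow> (nat \<times> nat) set set" where
  "boards m n r = {B. B \<subseteq> cells m n \<and> card B = r}"

definition reflH :: "nat \<Rightarrow> nat \<Rightarrow> nat \<times> nat \<Rightarrow> nat \<times> nat" where
  "reflH m n = (\<lambda>(i, j). (m - 1 - i, j))"

definition reflV :: "nat \<Rightarrow> nat \<Rightarrow> nat \<times> nat \<Rightarrow> nat \<times> nat" where
  "reflV m n = (\<lambda>(i, j). (i, n - 1 - j))"

definition groupHV :: "nat \<Rightarrow> nat \<Rightarrow> (nat \<times> nat \<Rightarrow> nat \<times> nat) set" where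
  "groupHV m n = {id, reflH m n, reflV m n, reflH m n \<circ> reflV m n}"

definition orbit :: "('a \<Rightarrow> 'a) set \<Rightarrow> 'a set \<Rightarrow> 'a set set" where
  "orbit G B = {g ` B | g. g \<in> G}"

definition orbits :: "('a \<Rightarrow> 'a) set \<Rightarrow> 'a set set \<Rightarrow> 'a set set set" where
  "orbits G \<B> = orbit G ` \<B>"

definition choose_half :: "nat \<Rightarrow> nat \<Rightarrow> nat" where
  "choose_half a m = (if even m then a choose (m div 2) else 0)"

end

theory Submission
  imports Defs
begin


locale actg =
  fixes A :: "'a set" and G :: "('a \<Rightarrow> 'a) set"
  assumes finG: "finite G"
  and idG: "id \<in> G"
  and mapsA: "\<And>g x. g \<in> G \<Longrightarrow> x \<in> A \<Longrightarrow> g x \<in> A"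
  and invol: "\<And>g x. g \<in> G \<Longrightarrow> x \<in> A \<Longrightarrow> g (g x) = x"
  and compG: "\<And>g h. g \<in> G \<Longrightarrow> h \<in> G \<Longrightarrow> \<exists>f\<in>G. \<forall>x\<in>A. f x = g (h x)"
  and extG: "\<And>g h. g \<in> G \<Longrightarrow> h \<in> G \<Longrightarrow> \<forall>x\<in>A. g x = h x \<Longrightarrow> g = h"
begin

definition cmp where "cmp g h = (THE f. f \<in> G \<and> (\<forall>x\<in>A. f x = g (h x)))"

lemma cmp: assumes "g \<in> G" "h \<in> G"
  shows "cmp g h \<in> G \<and> (\<forall>x\<in>A. cmp g h x = g (h x))"
proof -
  have "\<exists>!f. f \<in> G \<and> (\<forall>x\<in>A. f x = g (h x))"
    using compG[OF assms] extG by metis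
  then show ?thesis unfolding cmp_def by (rule theI')
qed

lemma cmp_img: "g \<in> G \<Longrightarrow> h \<in> G \<Longrightarrow> B \<subseteq> A \<Longrightarrow> cmp g h ` B = g ` h ` B"
  using cmp by (force simp: image_iff)

lemma invol_img: "g \<in> G \<Longrightarrow> B \<subseteq> A \<Longrightarrow> g ` g ` B = B"
  using invol by (force simp: image_iff)

lemma img_sub: "g \<in> G \<Longrightarrow> B \<subseteq> A \<Longrightarrow> g ` B \<subseteq> A"
  using mapsA by auto

lemma orbit_img: "orbit G B = (\<lambda>g. g ` B) ` G"
  unfolding orbit_def by auto

lemma card_fibers:
  assumes "finite S"
  shows "card S = (\<Sum>y\<in>f ` S. card {x\<in>S. f x = y})"
  using sum.group[OF assms finite_imageI[OF assms] subset_refl, where g=f and h="\<lambda>_. 1::nat"] by simp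

lemma orbit_stab:
  assumes B: "B \<subseteq> A"
  shows "card (orbit G B) * card {g\<in>G. g ` B = B} = card G"
proof -
  have "card G = (\<Sum>Q\<in>orbit G B. card {g\<in>G. g ` B = Q})"
    unfolding orbit_img by (rule card_fibers[OF finG])
  also have "\<dots> = (\<Sum>Q\<in>orbit G B. card {g\<in>G. g ` B = B})"
  proof (rule sum.cong[OF refl])
    fix Q assume "Q \<in> orbit G B"
    then obtain g' where g': "g' \<in> G" "Q = g' ` B" unfolding orbit_img by auto
    have "bij_betw (cmp g') {g\<in>G. g ` B = B} {g\<in>G. g ` B = Q}"
    proof (rule bij_betw_byWitness[where f'="cmp g'"])
      show "\<forall>a\<in>{g \<in> G. g ` B = B}. cmp g' (cmp g' a) = a"
      proof
        fix h assume h: "h \<in> {g \<in> G. g ` B = B}"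
        show "cmp g' (cmp g' h) = h"
          apply (rule extG)
          using h g' cmp mapsA invol by auto
      qed
      show "\<forall>a\<in>{g \<in> G. g ` B = Q}. cmp g' (cmp g' a) = a"
      proof
        fix h assume h: "h \<in> {g \<in> G. g ` B = Q}"
        show "cmp g' (cmp g' h) = h"
          apply (rule extG)
          using h g' cmp mapsA invol by auto
      qed
      show "cmp g' ` {g \<in> G. g ` B = B} \<subseteq> {g \<in> G. g ` B = Q}"
      proof
        fix y assume "y \<in> cmp g' ` {g \<in> G. g ` B = B}"
        then obtain h where h: "h \<in> G" "h ` B = B" "y = cmp g' h" by auto
        then have "y ` B = g' ` h ` B" using cmp_img g' B by auto
        then show "y \<in> {g \<in> G. g ` B = Q}" using h g' cmp by auto
      qed
      show "cmp g' ` {g \<in> G. g ` B = Q} \<subseteq> {g \<in> G. g ` B = B}"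
      proof
        fix y assume "y \<in> cmp g' ` {g \<in> G. g ` B = Q}"
        then obtain h where h: "h \<in> G" "h ` B = Q" "y = cmp g' h" by auto
        then have "y ` B = g' ` h ` B" using cmp_img g' B by auto
        also have "\<dots> = B" using h g' invol_img B by auto
        finally show "y \<in> {g \<in> G. g ` B = B}" using h g' cmp by auto
      qed
    qed
    then show "card {g\<in>G. g ` B = Q} = card {g\<in>G. g ` B = B}"
      by (simp add: bij_betw_same_card)
  qed
  also have "\<dots> = card (orbit G B) * card {g\<in>G. g ` B = B}" by simp
  finally show ?thesis by simp
qed

lemma orbit_eq:
  assumes B: "B \<subseteq> A" and C: "C \<in> orbit G B"
  shows "orbit G C = orbit G B"
proof -
  obtain g where g: "g \<in> G" "C = g ` B" using C unfolding orbit_img by auto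
  have CA: "C \<subseteq> A" using g img_sub B by auto
  have 1: "orbit G C \<subseteq> orbit G B"
  proof
    fix D assume "D \<in> orbit G C"
    then obtain h where "h \<in> G" "D = h ` C" unfolding orbit_img by auto
    then have "D = cmp h g ` B" using cmp_img g B by auto
    then show "D \<in> orbit G B" using cmp \<open>h \<in> G\<close> g unfolding orbit_img by auto
  qed
  have "B = g ` C" using g invol_img B by auto
  have 2: "orbit G B \<subseteq> orbit G C"
  proof
    fix D assume "D \<in> orbit G B"
    then obtain h where "h \<in> G" "D = h ` B" unfolding orbit_img by auto
    then have "D = h ` g ` C" using \<open>B = g ` C\<close> by simp
    also have "\<dots> = cmp h g ` C" using cmp_img[OF \<open>h \<in> G\<close> g(1) CA] by simp
    finally have "D = cmp h g ` C" .
    then show "D \<in> orbit G C" using cmp \<open>h \<in> G\<close> g unfolding orbit_img by auto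
  qed
  show ?thesis using 1 2 by auto
qed

lemma card_if: "finite S \<Longrightarrow> (\<Sum>x\<in>S. if P x then 1 else 0 :: real) = real (card {x\<in>S. P x})"
  by (simp add: sum.If_cases Int_def conj_commute)

lemma burnside:
  assumes finX: "finite X" and XA: "\<And>B. B \<in> X \<Longrightarrow> B \<subseteq> A"
    and cl: "\<And>g B. g \<in> G \<Longrightarrow> B \<in> X \<Longrightarrow> g ` B \<in> X"
  shows "real (card (orbits G X)) * real (card G) = (\<Sum>g\<in>G. real (card {B\<in>X. g ` B = B}))"
proof -
  have pos: "card (orbit G B) > 0" for B
    using finG idG unfolding orbit_img by (auto simp: card_gt_0_iff)
  have "(\<Sum>g\<in>G. real (card {B\<in>X. g ` B = B})) = (\<Sum>g\<in>G. \<Sum>B\<in>X. if g ` B = B then 1 else 0)"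
    using card_if[OF finX] by simp
  also have "\<dots> = (\<Sum>B\<in>X. \<Sum>g\<in>G. if g ` B = B then 1 else 0)" by (rule sum.swap)
  also have "\<dots> = (\<Sum>B\<in>X. real (card {g\<in>G. g ` B = B}))"
    using card_if[OF finG] by simp
  also have "\<dots> = (\<Sum>B\<in>X. real (card G) / real (card (orbit G B)))"
  proof (rule sum.cong[OF refl])
    fix B assume "B \<in> X"
    then have "card (orbit G B) * card {g\<in>G. g ` B = B} = card G"
      using orbit_stab XA by blast
    then have "real (card (orbit G B) * card {g\<in>G. g ` B = B}) = real (card G)"
      by simp
    then have "real (card (orbit G B)) * real (card {g\<in>G. g ` B = B}) = real (card G)"
      by (simp only: of_nat_mult)
    then show "real (card {g\<in>G. g ` B = B}) = real (card G) / real (card (orbit G B))"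
      using pos[of B] by (simp add: field_simps)
  qed
  also have "\<dots> = real (card G) * (\<Sum>B\<in>X. 1 / real (card (orbit G B)))"
    by (simp add: sum_distrib_left)
  also have "(\<Sum>B\<in>X. 1 / real (card (orbit G B))) = 
     (\<Sum>Q\<in>orbit G ` X. \<Sum>B\<in>{B\<in>X. orbit G B = Q}. 1 / real (card (orbit G B)))"
    by (rule sum.group[symmetric]) (use finX in auto)
  also have "\<dots> = (\<Sum>Q\<in>orbit G ` X. 1)"
  proof (rule sum.cong[OF refl])
    fix Q assume "Q \<in> orbit G ` X"
    then obtain B0 where B0: "B0 \<in> X" "Q = orbit G B0" by auto
    have eq: "{B\<in>X. orbit G B = Q} = Q"
    proof
      show "{B\<in>X. orbit G B = Q} \<subseteq> Q"
      proof
        fix B assume "B \<in> {B\<in>X. orbit G B = Q}"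
        have "B \<in> orbit G B" unfolding orbit_img by (rule image_eqI[OF _ idG]) simp
        moreover have "orbit G B = Q" using \<open>B \<in> {B\<in>X. orbit G B = Q}\<close> by simp
        ultimately have "B \<in> orbit G B" "orbit G B = Q" by auto
        then show "B \<in> Q" by simp
      qed
      show "Q \<subseteq> {B\<in>X. orbit G B = Q}"
      proof
        fix B assume "B \<in> Q"
        then have "B \<in> X" using B0 cl unfolding orbit_img by auto
        moreover have "orbit G B = Q" using orbit_eq B0 XA \<open>B \<in> Q\<close> by auto
        ultimately show "B \<in> {B\<in>X. orbit G B = Q}" by simp
      qed
    qed
    have "(\<Sum>B\<in>{B\<in>X. orbit G B = Q}. 1 / real (card (orbit G B))) = (\<Sum>B\<in>Q. 1 / real (card Q))"
      using eq by (intro sum.cong) auto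
    also have "\<dots> = 1" using pos[of B0] B0 by simp
    finally show "(\<Sum>B\<in>{B\<in>X. orbit G B = Q}. 1 / real (card (orbit G B))) = 1" .
  qed
  also have "\<dots> = real (card (orbits G X))" by (simp add: orbits_def)
  finally show ?thesis by simp
qed

end



lemma sym_count:
  fixes \<sigma> :: "'a \<Rightarrow> 'a"
  assumes finA: "finite A" and mA: "\<forall>x\<in>A. \<sigma> x \<in> A" and inv: "\<forall>x\<in>A. \<sigma> (\<sigma> x) = x"
    and RA: "R \<subseteq> A" and Rsplit: "\<forall>x\<in>A. \<sigma> x \<noteq> x \<longrightarrow> (x \<in> R \<longleftrightarrow> \<sigma> x \<notin> R)"
    and Rnf: "\<forall>x\<in>R. \<sigma> x \<noteq> x"
  shows "card {B. (B \<subseteq> A \<and> card B = r) \<and> \<sigma> ` B = B}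
       = (\<Sum>t=0..r. (card {x\<in>A. \<sigma> x = x} choose t) * choose_half (card R) (r - t))"
proof -
  define F where "F = {x\<in>A. \<sigma> x = x}"
  define \<Phi> where "\<Phi> = (\<lambda>(S::'a set, T). S \<union> T \<union> \<sigma> ` T)"
  define \<Psi> where "\<Psi> = (\<lambda>B::'a set. (B \<inter> F, B \<inter> R))"
  define P where "P = {(S,T). S \<subseteq> F \<and> T \<subseteq> R \<and> card S + 2 * card T = r}"
  define Fix where "Fix = {B. (B \<subseteq> A \<and> card B = r) \<and> \<sigma> ` B = B}"
  have FA: "F \<subseteq> A" unfolding F_def by auto
  have finF: "finite F" using finA FA finite_subset by auto
  have finR: "finite R" using finA RA finite_subset by auto
  have props: "\<Phi> (S,T) \<subseteq> A \<and> \<sigma> ` \<Phi> (S,T) = \<Phi> (S,T) \<and> card (\<Phi> (S,T)) = card S + 2 * card T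
     \<and> \<Psi> (\<Phi> (S,T)) = (S,T)"
    if S: "S \<subseteq> F" and T: "T \<subseteq> R" for S T
  proof -
    have TA: "T \<subseteq> A" using T RA by auto
    have sTA: "\<sigma> ` T \<subseteq> A" using TA mA by auto
    have sub: "\<Phi> (S,T) \<subseteq> A" unfolding \<Phi>_def using S FA TA sTA by auto
    have sS: "\<sigma> ` S = S" using S unfolding F_def by force
    have ssT: "\<sigma> ` \<sigma> ` T = T" using TA inv by force
    have e: "\<Phi> (S,T) = S \<union> T \<union> \<sigma> ` T" unfolding \<Phi>_def by simp
    have sym: "\<sigma> ` \<Phi> (S,T) = \<Phi> (S,T)" unfolding e image_Un sS ssT by blast
    have d1: "S \<inter> T = {}" using S T Rnf unfolding F_def by auto
    have sTF: "\<sigma> ` T \<inter> F = {}"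
    proof (rule ccontr)
      assume "\<sigma> ` T \<inter> F \<noteq> {}"
      then obtain t where t: "t \<in> T" "\<sigma> t \<in> F" by auto
      then have "\<sigma> (\<sigma> t) = \<sigma> t" using S unfolding F_def by auto
      then have "\<sigma> t = t" using inv t TA by auto
      then show False using Rnf t T by auto
    qed
    have d2: "S \<inter> \<sigma> ` T = {}" using sTF S by auto
    have d3: "T \<inter> \<sigma> ` T = {}"
    proof (rule ccontr)
      assume "T \<inter> \<sigma> ` T \<noteq> {}"
      then obtain t where t: "t \<in> T" "\<sigma> t \<in> T" by auto
      then show False using Rsplit Rnf T TA by blast
    qed
    have injT: "inj_on \<sigma> T" using TA inv by (metis inj_on_inverseI subsetD)
    have finT: "finite T" using T finR finite_subset by auto
    have finS: "finite S" using S finF finite_subset by auto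
    have "card (\<Phi> (S,T)) = card S + card T + card (\<sigma> ` T)"
      unfolding \<Phi>_def using d1 d2 d3 finT finS
      by (simp add: card_Un_disjoint Int_Un_distrib2)
    also have "card (\<sigma> ` T) = card T" using injT by (simp add: card_image)
    finally have c: "card (\<Phi> (S,T)) = card S + 2 * card T" by simp
    have p1: "\<Phi> (S,T) \<inter> F = S"
    proof -
      have "T \<inter> F = {}" using T Rnf unfolding F_def by auto
      then show ?thesis unfolding \<Phi>_def using S sTF by auto
    qed
    have p2: "\<Phi> (S,T) \<inter> R = T"
    proof -
      have "S \<inter> R = {}" using S Rnf unfolding F_def by auto
      moreover have "\<sigma> ` T \<inter> R = {}"
      proof (rule ccontr)
        assume "\<sigma> ` T \<inter> R \<noteq> {}"
        then obtain t where t: "t \<in> T" "\<sigma> t \<in> R" by auto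
        then show False using Rsplit Rnf T TA by blast
      qed
      ultimately show ?thesis unfolding \<Phi>_def using T by auto
    qed
    show ?thesis using sub sym c p1 p2 unfolding \<Psi>_def by simp
  qed
  have phipsi: "\<Phi> (\<Psi> B) = B" if B: "B \<subseteq> A" "\<sigma> ` B = B" for B
  proof
    show "\<Phi> (\<Psi> B) \<subseteq> B" unfolding \<Phi>_def \<Psi>_def using B by auto
    show "B \<subseteq> \<Phi> (\<Psi> B)"
    proof
      fix x assume x: "x \<in> B"
      then have xA: "x \<in> A" using B by auto
      show "x \<in> \<Phi> (\<Psi> B)"
      proof (cases "\<sigma> x = x")
        case True then show ?thesis using x xA unfolding \<Phi>_def \<Psi>_def F_def by auto
      next
        case False
        show ?thesis
        proof (cases "x \<in> R")
          case True then show ?thesis using x unfolding \<Phi>_def \<Psi>_def by auto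
        next
          case nR: False
          then have "\<sigma> x \<in> R" using Rsplit False xA by auto
          moreover have "\<sigma> x \<in> B" using x B by auto
          moreover have "x = \<sigma> (\<sigma> x)" using inv xA by auto
          ultimately show ?thesis unfolding \<Phi>_def \<Psi>_def by auto
        qed
      qed
    qed
  qed
  have bij: "bij_betw \<Phi> P Fix"
  proof (rule bij_betw_byWitness[where f'=\<Psi>])
    show "\<forall>a\<in>P. \<Psi> (\<Phi> a) = a" using props unfolding P_def by auto
    show "\<forall>a'\<in>Fix. \<Phi> (\<Psi> a') = a'" using phipsi unfolding Fix_def by auto
    show "\<Phi> ` P \<subseteq> Fix" using props unfolding P_def Fix_def by auto
    show "\<Psi> ` Fix \<subseteq> P"
    proof
      fix y assume "y \<in> \<Psi> ` Fix"
      then obtain B where B: "B \<in> Fix" "y = \<Psi> B" by auto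
      have S: "B \<inter> F \<subseteq> F" and T: "B \<inter> R \<subseteq> R" by auto
      have "card B = card (\<Phi> (B \<inter> F, B \<inter> R))" using phipsi[of B] B unfolding Fix_def \<Psi>_def by auto
      also have "\<dots> = card (B \<inter> F) + 2 * card (B \<inter> R)" using props[OF S T] by simp
      finally show "y \<in> P" using B unfolding P_def Fix_def \<Psi>_def by auto
    qed
  qed
  have "card Fix = card P" using bij by (simp add: bij_betw_same_card)
  also have "P = (\<Union>t\<in>{0..r}. {S. S \<subseteq> F \<and> card S = t} \<times> {T. T \<subseteq> R \<and> 2 * card T = r - t})"
    unfolding P_def by auto
  also have "card \<dots> = (\<Sum>t=0..r. card ({S. S \<subseteq> F \<and> card S = t} \<times> {T. T \<subseteq> R \<and> 2 * card T = r - t}))"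
    by (rule card_UN_disjoint) (use finF finR in auto)
  also have "\<dots> = (\<Sum>t=0..r. (card F choose t) * choose_half (card R) (r - t))"
  proof (rule sum.cong[OF refl])
    fix t
    have "card {T. T \<subseteq> R \<and> 2 * card T = r - t} = choose_half (card R) (r - t)"
    proof (cases "even (r - t)")
      case True
      then have "{T. T \<subseteq> R \<and> 2 * card T = r - t} = {T. T \<subseteq> R \<and> card T = (r - t) div 2}" by auto
      then show ?thesis using True n_subsets[OF finR] unfolding choose_half_def by simp
    next
      case False
      then have "{T. T \<subseteq> R \<and> 2 * card T = r - t} = {}" by (auto simp del: even_diff_nat) (metis dvd_triv_left)
      then show ?thesis using False unfolding choose_half_def by (simp only: card.empty if_False)
    qed
    then show "card ({S. S \<subseteq> F \<and> card S = t} \<times> {T. T \<subseteq> R \<and> 2 * card T = r - t}) =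
       (card F choose t) * choose_half (card R) (r - t)"
      by (simp add: card_cartesian_product n_subsets[OF finF])
  qed
  finally show ?thesis unfolding Fix_def F_def .
qed



lemma sum_zero_choose: "(\<Sum>t=0..r. (0 choose t) * f t) = (f 0 :: nat)"
  by (induct r) auto

theorem proposition5p5:
  fixes k l r :: nat
  assumes "k \<ge> 1" and "l \<ge> 1" and "1 \<le> r" and "r \<le> 2*k*(2*l+1)"
  shows "real (card (orbits (groupHV (2*k) (2*l+1)) (boards (2*k) (2*l+1) r)))
    = (1/4) * (real ((2*k*(2*l+1)) choose r) + 2 * real (choose_half (k*(2*l+1)) r)
        + (\<Sum>t=0..r. real ((2*k) choose t) * real (choose_half (2*k*l) (r - t))))"
proof -
  define m where "m = 2*k"
  define n where "n = 2*l+1"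
  define A where "A = cells m n"
  define G where "G = groupHV m n"
  define H where "H = reflH m n"
  define V where "V = reflV m n"
  have Gdef: "G = {id, H, V, H \<circ> V}" unfolding G_def H_def V_def groupHV_def by simp
  have Hx: "H (i,j) = (2*k-1-i, j)" for i j unfolding H_def reflH_def m_def by simp
  have Vx: "V (i,j) = (i, 2*l-j)" for i j unfolding V_def reflV_def n_def by simp
  have Ain: "(x \<in> A) = (fst x < 2*k \<and> snd x < 2*l+1)" for x
    unfolding A_def cells_def m_def n_def by (cases x) auto
  have HH: "x \<in> A \<Longrightarrow> H (H x) = x" for x using Hx Ain by (cases x) auto
  have VV: "x \<in> A \<Longrightarrow> V (V x) = x" for x using Vx Ain by (cases x) auto
  have VH: "V (H x) = H (V x)" for x using Hx Vx by (cases x) auto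
  have HA: "x \<in> A \<Longrightarrow> H x \<in> A" for x using Hx Ain by (cases x) auto
  have VA: "x \<in> A \<Longrightarrow> V x \<in> A" for x using Vx Ain by (cases x) auto
  have z: "(0,0) \<in> A" using Ain assms by auto
  have H0: "H (0,0) = (2*k-1,0)" using Hx by simp
  have V0: "V (0,0) = (0,2*l)" using Vx by simp
  have HV0: "(H \<circ> V) (0,0) = (2*k-1,2*l)" using Hx Vx by simp
  have neq: "id \<noteq> H" "id \<noteq> V" "id \<noteq> H \<circ> V" "H \<noteq> V" "H \<noteq> H \<circ> V" "V \<noteq> H \<circ> V"
  proof -
    have d: "\<And>f g. f (0::nat,0::nat) \<noteq> g (0,0) \<Longrightarrow> f \<noteq> (g :: nat \<times> nat \<Rightarrow> nat \<times> nat)" by auto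
    show "id \<noteq> H" by (rule d) (use H0 assms in simp)
    show "id \<noteq> V" by (rule d) (use V0 assms in simp)
    show "id \<noteq> H \<circ> V" by (rule d) (use HV0 assms in simp)
    show "H \<noteq> V" by (rule d) (use H0 V0 assms in simp)
    show "H \<noteq> H \<circ> V" by (rule d) (use H0 HV0 assms in simp)
    show "V \<noteq> H \<circ> V" by (rule d) (use V0 HV0 assms in simp)
  qed
  have ext0: "g (0,0) = h (0,0)" if "\<forall>x\<in>A. g x = h x" for g h :: "nat \<times> nat \<Rightarrow> nat \<times> nat"
    using that z by auto
  interpret actg A G
  proof
    show "finite G" unfolding Gdef by simp
    show "id \<in> G" unfolding Gdef by simp
    show "\<And>g x. g \<in> G \<Longrightarrow> x \<in> A \<Longrightarrow> g x \<in> A"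
    proof -
      fix g x assume "g \<in> G" "x \<in> A"
      then show "g x \<in> A" unfolding Gdef using HA[of x] VA[of x] HA[of "V x"] by auto
    qed
    have ee: "\<And>x. x \<in> A \<Longrightarrow> H (H x) = x" "\<And>x. x \<in> A \<Longrightarrow> V (V x) = x"
      "\<And>x. x \<in> A \<Longrightarrow> H (H (V x)) = V x" "\<And>x. x \<in> A \<Longrightarrow> V (H (V x)) = H x"
      "\<And>x. x \<in> A \<Longrightarrow> H (V (H x)) = V x" "\<And>x. x \<in> A \<Longrightarrow> H (V (V x)) = H x"
      "\<And>x. x \<in> A \<Longrightarrow> H (V (H (V x))) = x" "\<And>x. V (H x) = H (V x)"
    proof -
      fix x assume xA: "x \<in> A"
      show "H (H x) = x" using HH[OF xA] .
      show "V (V x) = x" using VV[OF xA] .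
      show "H (H (V x)) = V x" using HH[OF VA[OF xA]] .
      show "V (H (V x)) = H x" using VH[of "V x"] VV[OF xA] by simp
      show "H (V (H x)) = V x" using VH[of x] HH[OF VA[OF xA]] by simp
      show "H (V (V x)) = H x" using VV[OF xA] by simp
      show "H (V (H (V x))) = x" using VH[of "V x"] VV[OF xA] HH[OF xA] by simp
    next
      fix x show "V (H x) = H (V x)" by (rule VH)
    qed
    show "\<And>g x. g \<in> G \<Longrightarrow> x \<in> A \<Longrightarrow> g (g x) = x"
    proof -
      fix g x assume "g \<in> G" "x \<in> A"
      then show "g (g x) = x" unfolding Gdef using ee(1,2,7)[of x] by auto
    qed
    show "\<And>g h. g \<in> G \<Longrightarrow> h \<in> G \<Longrightarrow> \<exists>f\<in>G. \<forall>x\<in>A. f x = g (h x)"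
    proof -
      fix g h assume g: "g \<in> G" and h: "h \<in> G"
      have cc1: "\<exists>f\<in>G. \<forall>x\<in>A. f x = (id) ((id) x)"
        by (rule bexI[where x="id"]) (simp_all add: Gdef ee)
      have cc2: "\<exists>f\<in>G. \<forall>x\<in>A. f x = (id) ((H) x)"
        by (rule bexI[where x="H"]) (simp_all add: Gdef ee)
      have cc3: "\<exists>f\<in>G. \<forall>x\<in>A. f x = (id) ((V) x)"
        by (rule bexI[where x="V"]) (simp_all add: Gdef ee)
      have cc4: "\<exists>f\<in>G. \<forall>x\<in>A. f x = (id) ((H \<circ> V) x)"
        by (rule bexI[where x="H \<circ> V"]) (simp_all add: Gdef ee)
      have cc5: "\<exists>f\<in>G. \<forall>x\<in>A. f x = (H) ((id) x)"
        by (rule bexI[where x="H"]) (simp_all add: Gdef ee)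
      have cc6: "\<exists>f\<in>G. \<forall>x\<in>A. f x = (H) ((H) x)"
        by (rule bexI[where x="id"]) (simp_all add: Gdef ee)
      have cc7: "\<exists>f\<in>G. \<forall>x\<in>A. f x = (H) ((V) x)"
        by (rule bexI[where x="H \<circ> V"]) (simp_all add: Gdef ee)
      have cc8: "\<exists>f\<in>G. \<forall>x\<in>A. f x = (H) ((H \<circ> V) x)"
        by (rule bexI[where x="V"]) (simp_all add: Gdef ee)
      have cc9: "\<exists>f\<in>G. \<forall>x\<in>A. f x = (V) ((id) x)"
        by (rule bexI[where x="V"]) (simp_all add: Gdef ee)
      have cc10: "\<exists>f\<in>G. \<forall>x\<in>A. f x = (V) ((H) x)"
        by (rule bexI[where x="H \<circ> V"]) (simp_all add: Gdef ee)
      have cc11: "\<exists>f\<in>G. \<forall>x\<in>A. f x = (V) ((V) x)"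
        by (rule bexI[where x="id"]) (simp_all add: Gdef ee)
      have cc12: "\<exists>f\<in>G. \<forall>x\<in>A. f x = (V) ((H \<circ> V) x)"
        by (rule bexI[where x="H"]) (simp_all add: Gdef ee)
      have cc13: "\<exists>f\<in>G. \<forall>x\<in>A. f x = (H \<circ> V) ((id) x)"
        by (rule bexI[where x="H \<circ> V"]) (simp_all add: Gdef ee)
      have cc14: "\<exists>f\<in>G. \<forall>x\<in>A. f x = (H \<circ> V) ((H) x)"
        by (rule bexI[where x="V"]) (simp_all add: Gdef ee)
      have cc15: "\<exists>f\<in>G. \<forall>x\<in>A. f x = (H \<circ> V) ((V) x)"
        by (rule bexI[where x="H"]) (simp_all add: Gdef ee)
      have cc16: "\<exists>f\<in>G. \<forall>x\<in>A. f x = (H \<circ> V) ((H \<circ> V) x)"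
        by (rule bexI[where x="id"]) (simp_all add: Gdef ee)
      have gc: "g = id \<or> g = H \<or> g = V \<or> g = H \<circ> V" using g unfolding Gdef by auto
      have hc: "h = id \<or> h = H \<or> h = V \<or> h = H \<circ> V" using h unfolding Gdef by auto
      show "\<exists>f\<in>G. \<forall>x\<in>A. f x = g (h x)"
        using gc hc cc1 cc2 cc3 cc4 cc5 cc6 cc7 cc8 cc9 cc10 cc11 cc12 cc13 cc14 cc15 cc16
        apply (elim disjE)
        apply (hypsubst, assumption)+
        done
    qed
    show "\<And>g h. g \<in> G \<Longrightarrow> h \<in> G \<Longrightarrow> \<forall>x\<in>A. g x = h x \<Longrightarrow> g = h"
    proof -
      fix g h assume g: "g \<in> G" and h: "h \<in> G" and e: "\<forall>x\<in>A. g x = h x"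
      have "g (0,0) = h (0,0)" using ext0 e by blast
      then show "g = h" using g h H0 V0 HV0 assms unfolding Gdef by auto
    qed
  qed
  define X where "X = boards m n r"
  have finA: "finite A" unfolding A_def cells_def by simp
  have finX: "finite X" unfolding X_def boards_def A_def[symmetric]
    using finA by (rule finite_subset[rotated, OF finite_Collect_subsets]) auto
  have XA: "\<And>B. B \<in> X \<Longrightarrow> B \<subseteq> A" unfolding X_def boards_def A_def by auto
  have cl: "\<And>g B. g \<in> G \<Longrightarrow> B \<in> X \<Longrightarrow> g ` B \<in> X"
  proof -
    fix g B assume g: "g \<in> G" and B: "B \<in> X"
    have BA: "B \<subseteq> A" using XA B by auto
    have "inj_on g B" using g BA invol by (metis inj_on_inverseI subsetD)
    then have "card (g ` B) = card B" by (simp add: card_image)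
    moreover have "g ` B \<subseteq> A" using img_sub g BA by auto
    ultimately show "g ` B \<in> X" using B unfolding X_def boards_def A_def by auto
  qed
  have bs: "real (card (orbits G X)) * real (card G) = (\<Sum>g\<in>G. real (card {B\<in>X. g ` B = B}))"
    by (rule burnside[OF finX XA cl])
  have cG: "card G = 4" unfolding Gdef using neq by simp
  have sumG: "(\<Sum>g\<in>G. real (card {B\<in>X. g ` B = B})) =
      real (card {B\<in>X. id ` B = B}) + real (card {B\<in>X. H ` B = B}) + real (card {B\<in>X. V ` B = B})
      + real (card {B\<in>X. (H \<circ> V) ` B = B})"
    unfolding Gdef using neq by (simp add: add.assoc)
  have Xe: "{B\<in>X. g ` B = B} = {B. (B \<subseteq> A \<and> card B = r) \<and> g ` B = B}" for g
    unfolding X_def boards_def A_def by auto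
  have c1: "card {B\<in>X. id ` B = B} = (2*k*(2*l+1)) choose r"
  proof -
    have "{B\<in>X. id ` B = B} = {B. B \<subseteq> A \<and> card B = r}" unfolding Xe by auto
    moreover have "card A = 2*k*(2*l+1)" unfolding A_def cells_def m_def n_def
      by (simp add: card_cartesian_product)
    ultimately show ?thesis using n_subsets[OF finA] by simp
  qed
  have Hnf: "H x \<noteq> x" if "x \<in> A" for x
  proof -
    obtain a b where x: "x = (a,b)" by (cases x)
    have "a < 2*k" using that Ain x by auto
    then have "2*k-1-a \<noteq> a" by arith
    then show ?thesis using x Hx by simp
  qed
  have HVx: "H (V (i,j)) = (2*k-1-i, 2*l-j)" for i j using Hx Vx by simp
  have HVnf: "H (V x) \<noteq> x" if "x \<in> A" for x
  proof -
    obtain a b where x: "x = (a,b)" by (cases x)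
    have "a < 2*k" using that Ain x by auto
    then have "2*k-1-a \<noteq> a" by arith
    then show ?thesis using x HVx by simp
  qed
  have c2: "card {B\<in>X. H ` B = B} = choose_half (k*(2*l+1)) r"
  proof -
    let ?R = "{0..<k} \<times> {0..<2*l+1}"
    have a1: "\<forall>x\<in>A. H x \<in> A" using HA by auto
    have a2: "\<forall>x\<in>A. H (H x) = x" using HH by auto
    have a3: "?R \<subseteq> A" using Ain by auto
    have a4: "\<forall>x\<in>A. H x \<noteq> x \<longrightarrow> (x \<in> ?R \<longleftrightarrow> H x \<notin> ?R)"
    proof (intro ballI impI)
      fix x assume "x \<in> A" "H x \<noteq> x"
      obtain a b where x: "x = (a,b)" by (cases x)
      have "a < 2*k" "b < 2*l+1" using \<open>x \<in> A\<close> Ain x by auto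
      then show "(x \<in> ?R \<longleftrightarrow> H x \<notin> ?R)" using x Hx by auto
    qed
    have a5: "\<forall>x\<in>?R. H x \<noteq> x" using Hnf a3 by auto
    have "card {B\<in>X. H ` B = B} = (\<Sum>t=0..r. (card {x\<in>A. H x = x} choose t) * choose_half (card ?R) (r - t))"
      unfolding Xe by (rule sym_count[OF finA a1 a2 a3 a4 a5])
    also have "{x\<in>A. H x = x} = {}" using Hnf by auto
    also have "card ?R = k*(2*l+1)" by (simp add: card_cartesian_product)
    finally show ?thesis using sum_zero_choose[where r=r and f="\<lambda>t. choose_half (k*(2*l+1)) (r - t)"] by simp
  qed
  have c4: "card {B\<in>X. (H \<circ> V) ` B = B} = choose_half (k*(2*l+1)) r"
  proof -
    let ?R = "{0..<k} \<times> {0..<2*l+1}"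
    have a1: "\<forall>x\<in>A. (H \<circ> V) x \<in> A" using HA VA by auto
    have a2: "\<forall>x\<in>A. (H \<circ> V) ((H \<circ> V) x) = x" using HH VV VH HA VA by auto
    have a3: "?R \<subseteq> A" using Ain by auto
    have a4: "\<forall>x\<in>A. (H \<circ> V) x \<noteq> x \<longrightarrow> (x \<in> ?R \<longleftrightarrow> (H \<circ> V) x \<notin> ?R)"
    proof (intro ballI impI)
      fix x assume "x \<in> A" "(H \<circ> V) x \<noteq> x"
      obtain a b where x: "x = (a,b)" by (cases x)
      have "a < 2*k" "b < 2*l+1" using \<open>x \<in> A\<close> Ain x by auto
      then show "(x \<in> ?R \<longleftrightarrow> (H \<circ> V) x \<notin> ?R)" using x HVx by auto
    qed
    have a5: "\<forall>x\<in>?R. (H \<circ> V) x \<noteq> x" using HVnf a3 by auto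
    have "card {B\<in>X. (H \<circ> V) ` B = B} = (\<Sum>t=0..r. (card {x\<in>A. (H \<circ> V) x = x} choose t) * choose_half (card ?R) (r - t))"
      unfolding Xe by (rule sym_count[OF finA a1 a2 a3 a4 a5])
    also have "{x\<in>A. (H \<circ> V) x = x} = {}" using HVnf by auto
    also have "card ?R = k*(2*l+1)" by (simp add: card_cartesian_product)
    finally show ?thesis using sum_zero_choose[where r=r and f="\<lambda>t. choose_half (k*(2*l+1)) (r - t)"] by simp
  qed
  have c3: "card {B\<in>X. V ` B = B} = (\<Sum>t=0..r. ((2*k) choose t) * choose_half (2*k*l) (r - t))"
  proof -
    let ?R = "{0..<2*k} \<times> {0..<l}"
    have a1: "\<forall>x\<in>A. V x \<in> A" using VA by auto
    have a2: "\<forall>x\<in>A. V (V x) = x" using VV by auto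
    have a3: "?R \<subseteq> A" using Ain by auto
    have a4: "\<forall>x\<in>A. V x \<noteq> x \<longrightarrow> (x \<in> ?R \<longleftrightarrow> V x \<notin> ?R)"
    proof (intro ballI impI)
      fix x assume "x \<in> A" "V x \<noteq> x"
      obtain a b where x: "x = (a,b)" by (cases x)
      have "a < 2*k" "b < 2*l+1" using \<open>x \<in> A\<close> Ain x by auto
      moreover have "b \<noteq> l" using \<open>V x \<noteq> x\<close> x Vx by auto
      ultimately show "(x \<in> ?R \<longleftrightarrow> V x \<notin> ?R)" using x Vx by auto
    qed
    have a5: "\<forall>x\<in>?R. V x \<noteq> x" using Vx by auto
    have "card {B\<in>X. V ` B = B} = (\<Sum>t=0..r. (card {x\<in>A. V x = x} choose t) * choose_half (card ?R) (r - t))"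
      unfolding Xe by (rule sym_count[OF finA a1 a2 a3 a4 a5])
    also have "{x\<in>A. V x = x} = {0..<2*k} \<times> {l}"
    proof
      show "{x\<in>A. V x = x} \<subseteq> {0..<2*k} \<times> {l}"
      proof
        fix x assume xx: "x \<in> {x\<in>A. V x = x}"
        obtain a b where x: "x = (a,b)" by (cases x)
        have "a < 2*k" "b < 2*l+1" "2*l - b = b" using xx Ain x Vx by auto
        then show "x \<in> {0..<2*k} \<times> {l}" using x by auto
      qed
      show "{0..<2*k} \<times> {l} \<subseteq> {x\<in>A. V x = x}" using Ain Vx by auto
    qed
    also have "card ({0..<2*k} \<times> {l}) = 2*k" by (simp add: card_cartesian_product)
    also have "card ?R = 2*k*l" by (simp add: card_cartesian_product)
    finally show ?thesis .
  qed
  have "real (card (orbits G X)) * 4 = real ((2*k*(2*l+1)) choose r) + 2 * real (choose_half (k*(2*l+1)) r)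
        + (\<Sum>t=0..r. real ((2*k) choose t) * real (choose_half (2*k*l) (r - t)))"
    using bs unfolding cG sumG c1 c2 c3 c4 by (simp add: of_nat_sum)
  then show ?thesis unfolding G_def X_def m_def n_def by simp
qed

end
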